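(* Let $Q$ be a tree quiver, let $(M,x)$ be a radiation module with $M$ exceptional, and let $\mathcal B=\mathcal B(M,x)$ be a radiation basis. Let $\alpha$ be an arrow of $Q$ connecting vertices $y$ and $z$ with $\dim M_y=\dim M_z$. Then, for suitable orderings of the bases $\mathcal B_y$ and $\mathcal B_z$, the matrix of $M_\alpha$ with respect to these bases is the identity matrix.
   Context: $k$ is a field; $Q$ is a locally finite quiver whose underlying graph is a tree; representations are finite-dimensional; $M$ exceptional means indecomposable with $\operatorname{Ext}^1(M,M)=0$. $S(x)$ is the simple at $x$; $Q^x$ is $Q$ with $x$ and its arrows deleted; restriction to $Q^x$ forgets $M_x$ and maps at $x$. Radiation modules (recursive): pairs $(M,x)$, $M$ indecomposable, $\dim M_x=1$; $(S(x),x)$ is one; if $M$ has length $\ge2$, $(M,x)$ is one if the restriction of $M$ to $Q^x$ is $\bigoplus_iN(i)$, $N(i)$ indecomposable, $\operatorname{Hom}(N(i),N(j))=0$ for $i\ne j$, with neighbors $y(i)$ of $x$ such that $(N(i),y(i))$ are radiation modules. Radiation basis containing nonzero $b\in M_x$ (recursive): $\{b\}$ for $S(x)$; otherwise, with $\alpha_i$ the arrow between $x$ and $y(i)$, let $b_i$ be the $N(i)_{y(i)}$-component of $M_{\alpha_i}(b)$ (with respect to $M_{y(i)}=\bigoplus_jN(j)_{y(i)}$) if $\alpha_i\colon x\to y(i)$, and the element of $N(i)_{y(i)}$ with $M_{\alpha_i}(b_i)=b$ if $\alpha_i\colon y(i)\to x$; $\mathcal B(M,x)=\{b\}\cup\bigcup_i\mathcal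 B(N(i),y(i))$ with $\mathcal B(N(i),y(i))$ a radiation basis of $(N(i),y(i))$ containing $b_i$. $\mathcal B_z$ denotes the elements of $\mathcal B$ in $M_z$. *)

theory Defs
  imports Complex_Main
begin

text \<open>Quivers are given by source and target maps on an arrow type 'a with vertex type 'v
(vertex set = UNIV).  Representations over the field 'k are families of finite-dimensional
subspaces V z of an ambient k-vector space 'w (scalar multiplication s), together with
maps f a which are linear from V (src a) to V (tgt a).\<close>

definition adjacent :: "('a \<Rightarrow> 'v) \<Rightarrow> ('a \<Rightarrow> 'v) \<Rightarrow> 'v \<Rightarrow> 'v \<Rightarrow> bool" where
  "adjacent src tgt u v \<longleftrightarrow> (\<exists>a. (src a = u \<and> tgt a = v) \<or> (src a = v \<and> tgt a = u))"

definition tree_quiver :: "('a \<Rightarrow> 'v) \<Rightarrow> ('a \<Rightarrow> 'v) \<Rightarrow> bool" where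
  "tree_quiver src tgt \<longleftrightarrow>
     (\<forall>a. src a \<noteq> tgt a) \<and>
     (\<forall>a a'. {src a, tgt a} = {src a', tgt a'} \<longrightarrow> a = a') \<and>
     (\<forall>u v. (adjacent src tgt)\<^sup>*\<^sup>* u v) \<and>
     (\<forall>vs. length vs \<ge> 3 \<and> distinct vs \<and>
           (\<forall>i. Suc i < length vs \<longrightarrow> adjacent src tgt (vs ! i) (vs ! Suc i))
           \<longrightarrow> \<not> adjacent src tgt (last vs) (hd vs))"

definition locally_finite :: "('a \<Rightarrow> 'v) \<Rightarrow> ('a \<Rightarrow> 'v) \<Rightarrow> bool" where
  "locally_finite src tgt \<longleftrightarrow> (\<forall>v. finite {a. src a = v \<or> tgt a = v})"

definition lin_on :: "('k \<Rightarrow> 'w \<Rightarrow> 'w) \<Rightarrow> 'w set \<Rightarrow> ('w \<Rightarrow> 'w::ab_group_add) \<Rightarrow> bool" where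
  "lin_on s A g \<longleftrightarrow> (\<forall>x\<in>A. \<forall>y\<in>A. g (x + y) = g x + g y) \<and> (\<forall>c. \<forall>x\<in>A. g (s c x) = s c (g x))"

definition is_rep :: "('k::field \<Rightarrow> 'w::ab_group_add \<Rightarrow> 'w) \<Rightarrow> ('a \<Rightarrow> 'v) \<Rightarrow> ('a \<Rightarrow> 'v) \<Rightarrow>
    ('v \<Rightarrow> 'w set) \<Rightarrow> ('a \<Rightarrow> 'w \<Rightarrow> 'w) \<Rightarrow> bool" where
  "is_rep s src tgt V f \<longleftrightarrow>
     (\<forall>z. module.subspace s (V z)) \<and>
     (\<forall>z. \<exists>B. finite B \<and> B \<subseteq> V z \<and> module.span s B = V z) \<and>
     finite {z. V z \<noteq> {0}} \<and>
     (\<forall>a. \<forall>v\<in>V (src a). f a v \<in> V (tgt a)) \<and>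
     (\<forall>a. lin_on s (V (src a)) (f a))"

definition subrep :: "('k::field \<Rightarrow> 'w::ab_group_add \<Rightarrow> 'w) \<Rightarrow> ('a \<Rightarrow> 'v) \<Rightarrow> ('a \<Rightarrow> 'v) \<Rightarrow>
    ('v \<Rightarrow> 'w set) \<Rightarrow> ('a \<Rightarrow> 'w \<Rightarrow> 'w) \<Rightarrow> ('v \<Rightarrow> 'w set) \<Rightarrow> bool" where
  "subrep s src tgt V f U \<longleftrightarrow>
     (\<forall>z. module.subspace s (U z) \<and> U z \<subseteq> V z) \<and>
     (\<forall>a. \<forall>v\<in>U (src a). f a v \<in> U (tgt a))"

definition nonzero_rep :: "('v \<Rightarrow> 'w::zero set) \<Rightarrow> bool" where
  "nonzero_rep V \<longleftrightarrow> (\<exists>z. V z \<noteq> {0})"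

definition indecomposable :: "('k::field \<Rightarrow> 'w::ab_group_add \<Rightarrow> 'w) \<Rightarrow> ('a \<Rightarrow> 'v) \<Rightarrow> ('a \<Rightarrow> 'v) \<Rightarrow>
    ('v \<Rightarrow> 'w set) \<Rightarrow> ('a \<Rightarrow> 'w \<Rightarrow> 'w) \<Rightarrow> bool" where
  "indecomposable s src tgt V f \<longleftrightarrow> nonzero_rep V \<and>
     \<not> (\<exists>U1 U2. subrep s src tgt V f U1 \<and> subrep s src tgt V f U2 \<and>
              nonzero_rep U1 \<and> nonzero_rep U2 \<and>
              (\<forall>z. U1 z \<inter> U2 z = {0} \<and> {u1 + u2 | u1 u2. u1 \<in> U1 z \<and> u2 \<in> U2 z} = V z))"

text \<open>Ext^1(M,M) = 0, via the standard description of Ext^1 for quiver representations as the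
cokernel of  (phi_z)_z \<mapsto> (M_a phi_{src a} - phi_{tgt a} M_a)_a.\<close>
definition ext1_vanishes :: "('k::field \<Rightarrow> 'w::ab_group_add \<Rightarrow> 'w) \<Rightarrow> ('a \<Rightarrow> 'v) \<Rightarrow> ('a \<Rightarrow> 'v) \<Rightarrow>
    ('v \<Rightarrow> 'w set) \<Rightarrow> ('a \<Rightarrow> 'w \<Rightarrow> 'w) \<Rightarrow> bool" where
  "ext1_vanishes s src tgt V f \<longleftrightarrow>
     (\<forall>h. (\<forall>a. lin_on s (V (src a)) (h a) \<and> h a ` V (src a) \<subseteq> V (tgt a)) \<longrightarrow>
        (\<exists>\<phi>. (\<forall>z. lin_on s (V z) (\<phi> z) \<and> \<phi> z ` V z \<subseteq> V z) \<and>
             (\<forall>a. \<forall>v\<in>V (src a). h a v = f a (\<phi> (src a) v) - \<phi> (tgt a) (f a v))))"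

definition exceptional :: "('k::field \<Rightarrow> 'w::ab_group_add \<Rightarrow> 'w) \<Rightarrow> ('a \<Rightarrow> 'v) \<Rightarrow> ('a \<Rightarrow> 'v) \<Rightarrow>
    ('v \<Rightarrow> 'w set) \<Rightarrow> ('a \<Rightarrow> 'w \<Rightarrow> 'w) \<Rightarrow> bool" where
  "exceptional s src tgt V f \<longleftrightarrow> indecomposable s src tgt V f \<and> ext1_vanishes s src tgt V f"

definition hom_zero :: "('k::field \<Rightarrow> 'w::ab_group_add \<Rightarrow> 'w) \<Rightarrow> ('a \<Rightarrow> 'v) \<Rightarrow> ('a \<Rightarrow> 'v) \<Rightarrow>
    ('v \<Rightarrow> 'w set) \<Rightarrow> ('a \<Rightarrow> 'w \<Rightarrow> 'w) \<Rightarrow> ('v \<Rightarrow> 'w set) \<Rightarrow> ('a \<Rightarrow> 'w \<Rightarrow> 'w) \<Rightarrow> bool" where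
  "hom_zero s src tgt V f V' f' \<longleftrightarrow>
     (\<forall>\<phi>. (\<forall>z. lin_on s (V z) (\<phi> z) \<and> \<phi> z ` V z \<subseteq> V' z) \<and>
          (\<forall>a. \<forall>v\<in>V (src a). \<phi> (tgt a) (f a v) = f' a (\<phi> (src a) v))
          \<longrightarrow> (\<forall>z. \<forall>v\<in>V z. \<phi> z v = 0))"

definition is_dsum :: "('v \<Rightarrow> 'w::ab_group_add set) \<Rightarrow> (nat \<Rightarrow> 'v \<Rightarrow> 'w set) \<Rightarrow> nat set \<Rightarrow> bool" where
  "is_dsum V N I \<longleftrightarrow> (\<forall>z. (\<forall>i\<in>I. N i z \<subseteq> V z) \<and>
     (\<forall>v\<in>V z. \<exists>!u. (\<forall>i\<in>I. u i \<in> N i z) \<and> (\<forall>i. i \<notin> I \<longrightarrow> u i = 0) \<and> v = sum u I))"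

definition rep_length :: "('k::field \<Rightarrow> 'w::ab_group_add \<Rightarrow> 'w) \<Rightarrow> ('v \<Rightarrow> 'w set) \<Rightarrow> nat" where
  "rep_length s V = (\<Sum>z\<in>{z. V z \<noteq> {0}}. vector_space.dim s (V z))"

text \<open>Restriction to Q^x, encoded as a representation of Q vanishing at x.\<close>
definition rest_sp :: "'v \<Rightarrow> ('v \<Rightarrow> 'w::zero set) \<Rightarrow> 'v \<Rightarrow> 'w set" where
  "rest_sp x V = (\<lambda>z. if z = x then {0} else V z)"

definition rest_map :: "('a \<Rightarrow> 'v) \<Rightarrow> ('a \<Rightarrow> 'v) \<Rightarrow> 'v \<Rightarrow> ('a \<Rightarrow> 'w \<Rightarrow> 'w::zero) \<Rightarrow> 'a \<Rightarrow> 'w \<Rightarrow> 'w" where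
  "rest_map src tgt x f = (\<lambda>a. if src a = x \<or> tgt a = x then (\<lambda>_. 0) else f a)"

inductive radiation :: "('k::field \<Rightarrow> 'w::ab_group_add \<Rightarrow> 'w) \<Rightarrow> ('a \<Rightarrow> 'v) \<Rightarrow> ('a \<Rightarrow> 'v) \<Rightarrow>
    ('v \<Rightarrow> 'w set) \<Rightarrow> ('a \<Rightarrow> 'w \<Rightarrow> 'w) \<Rightarrow> 'v \<Rightarrow> bool"
  for s src tgt where
  simple: "\<lbrakk> vector_space.dim s (V x) = 1; \<forall>z. z \<noteq> x \<longrightarrow> V z = {0} \<rbrakk>
     \<Longrightarrow> radiation s src tgt V f x"
| step: "\<lbrakk> indecomposable s src tgt V f; vector_space.dim s (V x) = 1; rep_length s V \<ge> 2;
           finite I;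
           \<forall>i\<in>I. subrep s src tgt (rest_sp x V) (rest_map src tgt x f) (N i);
           is_dsum (rest_sp x V) N I;
           \<forall>i\<in>I. indecomposable s src tgt (N i) (rest_map src tgt x f);
           \<forall>i\<in>I. \<forall>j\<in>I. i \<noteq> j \<longrightarrow>
              hom_zero s src tgt (N i) (rest_map src tgt x f) (N j) (rest_map src tgt x f);
           \<forall>i\<in>I. adjacent src tgt x (y i) \<and> radiation s src tgt (N i) (rest_map src tgt x f) (y i) \<rbrakk>
     \<Longrightarrow> radiation s src tgt V f x"

text \<open>Radiation bases; elements are tagged with their vertex.\<close>
inductive radbasis :: "('k::field \<Rightarrow> 'w::ab_group_add \<Rightarrow> 'w) \<Rightarrow> ('a \<Rightarrow> 'v) \<Rightarrow> ('a \<Rightarrow> 'v) \<Rightarrow>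
    ('v \<Rightarrow> 'w set) \<Rightarrow> ('a \<Rightarrow> 'w \<Rightarrow> 'w) \<Rightarrow> 'v \<Rightarrow> 'w \<Rightarrow> ('v \<times> 'w) set \<Rightarrow> bool"
  for s src tgt where
  simple: "\<lbrakk> vector_space.dim s (V x) = 1; \<forall>z. z \<noteq> x \<longrightarrow> V z = {0}; b \<in> V x; b \<noteq> 0 \<rbrakk>
     \<Longrightarrow> radbasis s src tgt V f x b {(x, b)}"
| step: "\<lbrakk> indecomposable s src tgt V f; vector_space.dim s (V x) = 1; rep_length s V \<ge> 2;
           b \<in> V x; b \<noteq> 0;
           finite I;
           \<forall>i\<in>I. subrep s src tgt (rest_sp x V) (rest_map src tgt x f) (N i);
           is_dsum (rest_sp x V) N I;
           \<forall>i\<in>I. indecomposable s src tgt (N i) (rest_map src tgt x f);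
           \<forall>i\<in>I. \<forall>j\<in>I. i \<noteq> j \<longrightarrow>
              hom_zero s src tgt (N i) (rest_map src tgt x f) (N j) (rest_map src tgt x f);
           \<forall>i\<in>I. adjacent src tgt x (y i) \<and> radiation s src tgt (N i) (rest_map src tgt x f) (y i);
           \<forall>i\<in>I. bb i \<in> N i (y i) \<and>
              (\<exists>a. (src a = x \<and> tgt a = y i \<and>
                     (\<exists>u. (\<forall>j\<in>I. u j \<in> N j (y i)) \<and> f a b = sum u I \<and> u i = bb i))
                 \<or> (src a = y i \<and> tgt a = x \<and> f a (bb i) = b));
           \<forall>i\<in>I. radbasis s src tgt (N i) (rest_map src tgt x f) (y i) (bb i) (BB i) \<rbrakk>
     \<Longrightarrow> radbasis s src tgt V f x b ({(x, b)} \<union> (\<Union>i\<in>I. BB i))"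

end

theory Submission
  imports Defs "HOL-Library.Transitive_Closure_Table"
begin


lemma adj_sym: "adjacent src tgt u v = adjacent src tgt v u"
  unfolding adjacent_def by auto

lemma adj_neq: "tree_quiver src tgt \<Longrightarrow> adjacent src tgt u v \<Longrightarrow> u \<noteq> v"
  unfolding adjacent_def tree_quiver_def by metis

lemma arrow_unique: "tree_quiver src tgt \<Longrightarrow> {src a, tgt a} = {src a', tgt a'} \<Longrightarrow> a = a'"
  unfolding tree_quiver_def by blast

lemma rtrancl_path_idx:
  "rtrancl_path r x xs y \<Longrightarrow> (\<forall>i. Suc i < length (x#xs) \<longrightarrow> r ((x#xs)!i) ((x#xs)!Suc i)) \<and> last (x#xs) = y"
proof (induct rule: rtrancl_path.induct)
  case (base x) then show ?case by simp
next
  case (step x y ys z)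
  show ?case
  proof (intro conjI allI impI)
    fix i assume "Suc i < length (x # y # ys)"
    then show "r ((x # y # ys) ! i) ((x # y # ys) ! Suc i)"
      using step by (cases i) auto
  next
    show "last (x # y # ys) = z" using step by simp
  qed
qed

lemma no_other_path:
  assumes T: "tree_quiver src tgt" and uv: "adjacent src tgt u v"
  shows "\<not> (\<lambda>a b. adjacent src tgt a b \<and> {a,b} \<noteq> {u,v})\<^sup>*\<^sup>* v u"
proof
  let ?E = "\<lambda>a b. adjacent src tgt a b \<and> {a,b} \<noteq> {u,v}"
  assume "?E\<^sup>*\<^sup>* v u"
  then obtain xs where "rtrancl_path ?E v xs u" by (auto simp: rtranclp_eq_rtrancl_path)
  then obtain xs' where p: "rtrancl_path ?E v xs' u" and d: "distinct (v # xs')"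
    by (rule rtrancl_path_distinct)
  from rtrancl_path_idx[OF p] have ad: "\<forall>i. Suc i < length (v#xs') \<longrightarrow> ?E ((v#xs')!i) ((v#xs')!Suc i)"
    and l: "last (v#xs') = u" by auto
  have "u \<noteq> v" using adj_neq[OF T uv] by simp
  then have "xs' \<noteq> []" using l by auto
  have "xs' \<noteq> [u]"
  proof
    assume "xs' = [u]"
    then have "?E v u" using ad[rule_format, of 0] by simp
    then show False by auto
  qed
  have len: "length (v#xs') \<ge> 3"
  proof -
    from \<open>xs' \<noteq> []\<close> obtain a r where xs: "xs' = a # r" by (cases xs') auto
    have "r \<noteq> []" using xs \<open>xs' \<noteq> [u]\<close> l by auto
    then show ?thesis using xs by (cases r) auto
  qed
  have "\<forall>i. Suc i < length (v#xs') \<longrightarrow> adjacent src tgt ((v#xs')!i) ((v#xs')!Suc i)"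
    using ad by blast
  with T len d have "\<not> adjacent src tgt (last (v#xs')) (hd (v#xs'))"
    unfolding tree_quiver_def by blast
  then show False using l uv by (simp add: adj_sym)
qed

definition ravoid :: "('a \<Rightarrow> 'v) \<Rightarrow> ('a \<Rightarrow> 'v) \<Rightarrow> 'v set \<Rightarrow> 'v \<Rightarrow> 'v \<Rightarrow> bool" where
  "ravoid src tgt A = (\<lambda>a b. adjacent src tgt a b \<and> a \<notin> A \<and> b \<notin> A)\<^sup>*\<^sup>*"

definition near :: "('a \<Rightarrow> 'v) \<Rightarrow> ('a \<Rightarrow> 'v) \<Rightarrow> 'v \<Rightarrow> 'v \<Rightarrow> 'v \<Rightarrow> bool" where
  "near src tgt r u v \<longleftrightarrow> \<not> ravoid src tgt {u} v r"

lemma ravoid_sym: "ravoid src tgt A a b \<Longrightarrow> ravoid src tgt A b a"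
proof -
  have e: "(\<lambda>a b. adjacent src tgt a b \<and> a \<notin> A \<and> b \<notin> A)\<inverse>\<inverse> = (\<lambda>a b. adjacent src tgt a b \<and> a \<notin> A \<and> b \<notin> A)"
    by (auto simp: adj_sym fun_eq_iff)
  assume "ravoid src tgt A a b"
  then have "((\<lambda>a b. adjacent src tgt a b \<and> a \<notin> A \<and> b \<notin> A)\<inverse>\<inverse>)\<^sup>*\<^sup>* b a"
    unfolding ravoid_def by (rule rtranclp_converseI)
  then show ?thesis unfolding e ravoid_def .
qed

lemma ravoid_in: "ravoid src tgt A a b \<Longrightarrow> b \<in> A \<Longrightarrow> a = b"
  unfolding ravoid_def by (induct rule: rtranclp_induct) auto

lemma ravoid_step: "ravoid src tgt A a b \<Longrightarrow> adjacent src tgt b c \<Longrightarrow> b \<notin> A \<Longrightarrow> c \<notin> A \<Longrightarrow> ravoid src tgt A a c"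
  unfolding ravoid_def by (auto intro: rtranclp.rtrancl_into_rtrancl)

lemma not_near_root: "near src tgt r v r \<Longrightarrow> v = r"
  unfolding near_def ravoid_def by auto

lemma near_shift:
  assumes "near src tgt x u v" "x \<noteq> u" "adjacent src tgt x r" "v \<noteq> u"
  shows "near src tgt r u v"
proof -
  { assume R: "ravoid src tgt {u} v r"
    have "r \<noteq> u" proof assume "r = u" then show False using ravoid_in[OF R] assms(4) by simp qed
    then have "ravoid src tgt {u} v x" using ravoid_step[OF R, of x] assms by (simp add: adj_sym)
    then have False using assms(1) unfolding near_def by simp }
  then show ?thesis unfolding near_def by blast
qed

lemma ravoid_E:
  assumes "ravoid src tgt {w} a b"
  shows "(\<lambda>a b. adjacent src tgt a b \<and> {a,b} \<noteq> {u,w})\<^sup>*\<^sup>* a b"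
  using assms unfolding ravoid_def
proof (induct rule: rtranclp_induct)
  case base then show ?case by simp
next
  case (step y z)
  then have "{y,z} \<noteq> {u,w}" by (auto simp: doubleton_eq_iff)
  with step show ?case by (auto intro: rtranclp.rtrancl_into_rtrancl)
qed

lemma near_or:
  assumes T: "tree_quiver src tgt" and uv: "adjacent src tgt u v"
  shows "near src tgt r u v \<or> near src tgt r v u"
proof (rule ccontr)
  assume "\<not> ?thesis"
  then have 1: "ravoid src tgt {u} v r" and 2: "ravoid src tgt {v} u r" unfolding near_def by auto
  let ?E = "\<lambda>a b. adjacent src tgt a b \<and> {a,b} \<noteq> {u,v}"
  have "?E\<^sup>*\<^sup>* v r" using ravoid_E[OF 1, of v] by (simp add: insert_commute)
  moreover have "?E\<^sup>*\<^sup>* r u" using ravoid_E[OF ravoid_sym[OF 2], of u] by simp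
  ultimately have "?E\<^sup>*\<^sup>* v u" by simp
  then show False using no_other_path[OF T uv] by simp
qed



definition Bv :: "('v \<times> 'w) set \<Rightarrow> 'v \<Rightarrow> 'w set" where
  "Bv B z = {w. (z, w) \<in> B}"

lemma dsum_sub: "is_dsum W N I \<Longrightarrow> i \<in> I \<Longrightarrow> N i z \<subseteq> W z"
  unfolding is_dsum_def by blast

lemma rest_sp_x: "rest_sp x V x = {0}" by (simp add: rest_sp_def)
lemma rest_sp_ne: "z \<noteq> x \<Longrightarrow> rest_sp x V z = V z" by (simp add: rest_sp_def)

lemma rest_map_ne: "src a \<noteq> x \<Longrightarrow> tgt a \<noteq> x \<Longrightarrow> rest_map src tgt x f a = f a"
  by (simp add: rest_map_def)
lemma rest_map_x: "src a = x \<or> tgt a = x \<Longrightarrow> rest_map src tgt x f a w = 0"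
  by (simp add: rest_map_def)

lemma rb_basic:
  assumes "radbasis s src tgt V f x b B"
  shows "finite B \<and> (\<forall>z w. (z,w)\<in>B \<longrightarrow> w \<in> V z \<and> w \<noteq> 0) \<and> (x,b) \<in> B \<and> (\<forall>w. (x,w)\<in>B \<longrightarrow> w = b)"
  using assms
proof induct
  case (simple V x b f)
  then show ?case by auto
next
  case (step V f x b I N y bb BB)
  have fin: "finite ({(x, b)} \<union> (\<Union>i\<in>I. BB i))" using step by auto
  have el: "w \<in> V z \<and> w \<noteq> 0 \<and> z \<noteq> x" if "i \<in> I" "(z,w) \<in> BB i" for i z w
  proof -
    have "w \<in> N i z" "w \<noteq> 0" using step that by blast+
    moreover have "N i z \<subseteq> rest_sp x V z" using dsum_sub[OF step(8) that(1)] .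
    ultimately show ?thesis by (cases "z = x") (auto simp: rest_sp_def)
  qed
  show ?case using fin el step(4,5) by fastforce
qed



lemma dsum_ex1: "is_dsum W N I \<Longrightarrow> v \<in> W z \<Longrightarrow> \<exists>!u. (\<forall>i\<in>I. u i \<in> N i z) \<and> (\<forall>i. i \<notin> I \<longrightarrow> u i = 0) \<and> v = sum u I"
  unfolding is_dsum_def by (drule spec[of _ z]) (elim conjE, erule bspec)

lemma ex1_eq: "\<exists>!x. P x \<Longrightarrow> P a \<Longrightarrow> P b \<Longrightarrow> a = b"
proof -
  assume "\<exists>!x. P x" "P a" "P b"
  then obtain w where "\<forall>y. P y \<longrightarrow> y = w" by (auto elim: ex1E)
  then show "a = b" using \<open>P a\<close> \<open>P b\<close> by metis
qed

lemma dsum_eq: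
  assumes "is_dsum W N I" "v \<in> W z"
    "(\<forall>i\<in>I. u1 i \<in> N i z) \<and> (\<forall>i. i \<notin> I \<longrightarrow> u1 i = 0) \<and> v = sum u1 I"
    "(\<forall>i\<in>I. u2 i \<in> N i z) \<and> (\<forall>i. i \<notin> I \<longrightarrow> u2 i = 0) \<and> v = sum u2 I"
  shows "u1 = u2"
  by (rule ex1_eq[where P="\<lambda>u. (\<forall>i\<in>I. u i \<in> N i z) \<and> (\<forall>i. i \<notin> I \<longrightarrow> u i = 0) \<and> v = sum u I", OF dsum_ex1[OF assms(1,2)] assms(3,4)])

lemma dsum_decomp: "is_dsum W N I \<Longrightarrow> v \<in> W z \<Longrightarrow> \<exists>u. (\<forall>i\<in>I. u i \<in> N i z) \<and> v = sum u I"
  by (drule dsum_ex1) (auto dest: ex1_implies_ex)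

lemma dsum_uniq:
  assumes D: "is_dsum W N I" and fin: "finite I" and v: "v \<in> W z"
    and u1: "\<forall>i\<in>I. u1 i \<in> N i z" "v = sum u1 I"
    and u2: "\<forall>i\<in>I. u2 i \<in> N i z" "v = sum u2 I"
    and i: "i \<in> I"
  shows "u1 i = u2 i"
proof -
  let ?u1 = "\<lambda>k. if k \<in> I then u1 k else 0" and ?u2 = "\<lambda>k. if k \<in> I then u2 k else 0"
  have s: "sum ?u1 I = sum u1 I" "sum ?u2 I = sum u2 I" by (auto intro: sum.cong)
  have ex: "\<exists>!u. (\<forall>i\<in>I. u i \<in> N i z) \<and> (\<forall>i. i \<notin> I \<longrightarrow> u i = 0) \<and> v = sum u I"
    using D v by (rule dsum_ex1)
  have p1: "(\<forall>i\<in>I. ?u1 i \<in> N i z) \<and> (\<forall>i. i \<notin> I \<longrightarrow> ?u1 i = 0) \<and> v = sum ?u1 I"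
    using u1 s by auto
  have p2: "(\<forall>i\<in>I. ?u2 i \<in> N i z) \<and> (\<forall>i. i \<notin> I \<longrightarrow> ?u2 i = 0) \<and> v = sum ?u2 I"
    using u2 s by auto
  have "?u1 = ?u2" by (rule dsum_eq[OF D v p1 p2])
  then show ?thesis using i by (metis (full_types))
qed

context vector_space begin

lemma dsum_disj:
  assumes D: "is_dsum W N I" and fin: "finite I" and sub: "\<forall>k\<in>I. subspace (N k z)"
    and ij: "i \<in> I" "j \<in> I" "i \<noteq> j" and w: "w \<in> N i z" "w \<in> N j z"
  shows "w = 0"
proof -
  have wW: "w \<in> W z" using dsum_sub[OF D ij(1)] w by blast
  let ?u1 = "\<lambda>k. if k = i then w else 0" and ?u2 = "\<lambda>k. if k = j then w else 0"
  have z: "0 \<in> N k z" if "k \<in> I" for k using subspace_0[OF sub[rule_format, OF that]] .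
  have a1: "(\<forall>k\<in>I. ?u1 k \<in> N k z) \<and> (\<forall>k. k \<notin> I \<longrightarrow> ?u1 k = 0) \<and> w = sum ?u1 I"
    using z w ij fin by (auto simp: sum.delta)
  have a2: "(\<forall>k\<in>I. ?u2 k \<in> N k z) \<and> (\<forall>k. k \<notin> I \<longrightarrow> ?u2 k = 0) \<and> w = sum ?u2 I"
    using z w ij fin by (auto simp: sum.delta)
  have "?u1 = ?u2" by (rule dsum_eq[OF D wW a1 a2])
  from fun_cong[OF this, of i] ij show ?thesis by simp
qed

lemma dsum_zero:
  assumes D: "is_dsum W N I" and fin: "finite I" and sub: "\<forall>k\<in>I. subspace (N k z)"
    and u: "\<forall>k\<in>I. u k \<in> N k z" and s0: "sum u I = 0" and i: "i \<in> I"
  shows "u i = 0"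
proof -
  have "0 \<in> W z" using dsum_sub[OF D i] subspace_0[OF sub[rule_format, OF i]] by blast
  moreover have "\<forall>k\<in>I. (\<lambda>_. 0) k \<in> N k z" using subspace_0 sub by simp
  ultimately show ?thesis using dsum_uniq[OF D fin, of 0 z u "\<lambda>_. 0" i] u s0 i by simp
qed

lemma subrep_props: "subrep scale src tgt W g U \<Longrightarrow> (\<forall>z. subspace (U z)) \<and> (\<forall>a. \<forall>w\<in>U (src a). g a w \<in> U (tgt a))"
  unfolding subrep_def by blast

lemma rb_indep:
  assumes "radbasis scale src tgt V f x b B"
  shows "(\<forall>z. subspace (V z)) \<longrightarrow> (\<forall>z. independent (Bv B z))"
  using assms
proof induct
  case (simple V x b f)
  show ?case
  proof (intro impI allI)
    fix z show "independent (Bv {(x, b)} z)" using simple by (cases "z = x") (auto simp: Bv_def independent_empty)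
  qed
next
  case (step V f x b I N y bb BB)
  show ?case
  proof (intro impI allI)
    fix z assume subV: "\<forall>z. subspace (V z)"
    have subN: "\<forall>i\<in>I. \<forall>z. subspace (N i z)" using step(7) subrep_props by blast
    have indN: "\<forall>i\<in>I. independent (Bv (BB i) z)" using step(13) subN by blast
    have basN: "\<forall>i\<in>I. \<forall>w\<in>Bv (BB i) z. w \<in> N i z \<and> w \<noteq> 0"
    proof (intro ballI)
      fix i w assume "i \<in> I" "w \<in> Bv (BB i) z"
      then show "w \<in> N i z \<and> w \<noteq> 0" using step(13) rb_basic[of scale src tgt "N i"] unfolding Bv_def by blast
    qed
    show "independent (Bv ({(x, b)} \<union> (\<Union>i\<in>I. BB i)) z)"
    proof (cases "z = x")
      case True
      have "w = 0" if "w \<in> N i z" "i \<in> I" for i w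
        using dsum_sub[OF step(8) that(2), of z] that(1) True by (auto simp: rest_sp_def)
      then have "Bv ({(x, b)} \<union> (\<Union>i\<in>I. BB i)) z = {b}"
        using basN True step(5) unfolding Bv_def by auto
      then show ?thesis using step(5) by simp
    next
      case False
      let ?A = "\<lambda>i. Bv (BB i) z"
      have eq: "Bv ({(x, b)} \<union> (\<Union>i\<in>I. BB i)) z = (\<Union>i\<in>I. ?A i)"
        using False unfolding Bv_def by auto
      have disj: "\<forall>i\<in>I. \<forall>j\<in>I. i \<noteq> j \<longrightarrow> ?A i \<inter> ?A j = {}"
      proof (intro ballI impI)
        fix i j assume ij: "i \<in> I" "j \<in> I" "i \<noteq> j"
        show "?A i \<inter> ?A j = {}"
        proof (rule ccontr)
          assume "?A i \<inter> ?A j \<noteq> {}"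
          then obtain w where "w \<in> ?A i" "w \<in> ?A j" by blast
          then show False using dsum_disj[OF step(8) step(6), of z i j w] subN basN ij by blast
        qed
      qed
      show ?thesis unfolding eq
      proof
        assume "dependent (\<Union>i\<in>I. ?A i)"
        then obtain t u where t: "finite t" "t \<subseteq> (\<Union>i\<in>I. ?A i)" "(\<Sum>v\<in>t. u v *s v) = 0"
          and nz: "\<exists>v\<in>t. u v \<noteq> 0" unfolding dependent_explicit by blast
        define g where "g i = (\<Sum>v\<in>t \<inter> ?A i. u v *s v)" for i
        have gN: "\<forall>i\<in>I. g i \<in> N i z"
          unfolding g_def using subN basN
          by (auto intro!: subspace_sum subspace_scale)
        have "t = (\<Union>i\<in>I. t \<inter> ?A i)" using t(2) by blast
        then have "(\<Sum>v\<in>t. u v *s v) = (\<Sum>i\<in>I. g i)"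
        proof -
          have d2: "\<forall>i\<in>I. \<forall>j\<in>I. i \<noteq> j \<longrightarrow> (t \<inter> ?A i) \<inter> (t \<inter> ?A j) = {}"
            using disj by blast
          have "(\<Sum>v\<in>(\<Union>i\<in>I. t \<inter> ?A i). u v *s v) = (\<Sum>i\<in>I. \<Sum>v\<in>t \<inter> ?A i. u v *s v)"
            by (rule sum.UNION_disjoint) (use step(6) t(1) d2 in auto)
          then show ?thesis using \<open>t = (\<Union>i\<in>I. t \<inter> ?A i)\<close> unfolding g_def by simp
        qed
        then have g0: "\<forall>i\<in>I. g i = 0" using dsum_zero[OF step(8) step(6)] subN gN t(3) by metis
        from nz obtain v where v: "v \<in> t" "u v \<noteq> 0" by blast
        then obtain i where i: "i \<in> I" "v \<in> ?A i" using t(2) by blast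
        have "dependent (?A i)" unfolding dependent_explicit
          using g0 i v t(1) unfolding g_def
          by (intro exI[of _ "t \<inter> ?A i"] exI[of _ u]) auto
        then show False using indN i by blast
      qed
    qed
  qed
qed

lemma rb_span:
  assumes "radbasis scale src tgt V f x b B"
  shows "(\<forall>z. subspace (V z)) \<longrightarrow> (\<forall>z. V z \<subseteq> span (Bv B z))"
  using assms
proof induct
  case (simple V x b f)
  show ?case
  proof (intro impI allI)
    fix z assume subV: "\<forall>z. subspace (V z)"
    show "V z \<subseteq> span (Bv {(x, b)} z)"
    proof (cases "z = x")
      case True
      obtain C where C: "{b} \<subseteq> C" "C \<subseteq> V x" "independent C" "V x \<subseteq> span C"
        using maximal_independent_subset_extend[of "{b}" "V x"] simple by auto
      have "card C = 1" using basis_card_eq_dim[OF C(2) C(4) C(3)] simple by simp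
      then have "C = {b}" using C(1) by (metis card_1_singletonE insert_subset singletonD)
      then show ?thesis using C True by (simp add: Bv_def)
    next
      case False then show ?thesis using simple subV by (auto simp: Bv_def span_zero)
    qed
  qed
next
  case (step V f x b I N y bb BB)
  show ?case
  proof (intro impI allI)
    fix z assume subV: "\<forall>z. subspace (V z)"
    have subN: "\<forall>i\<in>I. \<forall>z. subspace (N i z)" using step(7) subrep_props by blast
    have spN: "\<forall>i\<in>I. N i z \<subseteq> span (Bv (BB i) z)" using step(13) subN by blast
    show "V z \<subseteq> span (Bv ({(x, b)} \<union> (\<Union>i\<in>I. BB i)) z)"
    proof (cases "z = x")
      case True
      obtain C where C: "{b} \<subseteq> C" "C \<subseteq> V x" "independent C" "V x \<subseteq> span C"
        using maximal_independent_subset_extend[of "{b}" "V x"] step by auto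
      have "card C = 1" using basis_card_eq_dim[OF C(2) C(4) C(3)] step by simp
      then have "C = {b}" using C(1) by (metis card_1_singletonE insert_subset singletonD)
      then have "V x \<subseteq> span {b}" using C by simp
      moreover have "span {b} \<subseteq> span (Bv ({(x, b)} \<union> (\<Union>i\<in>I. BB i)) z)"
        using True by (intro span_mono) (auto simp: Bv_def)
      ultimately show ?thesis using True by blast
    next
      case False
      show ?thesis
      proof
        fix v assume "v \<in> V z"
        then have "v \<in> rest_sp x V z" using False by (simp add: rest_sp_def)
        then obtain u where u: "\<forall>i\<in>I. u i \<in> N i z" "v = sum u I" using dsum_decomp[OF step(8)] by blast
        have "\<forall>i\<in>I. u i \<in> span (Bv ({(x, b)} \<union> (\<Union>i\<in>I. BB i)) z)"
        proof
          fix i assume i: "i \<in> I"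
          have "span (Bv (BB i) z) \<subseteq> span (Bv ({(x, b)} \<union> (\<Union>i\<in>I. BB i)) z)"
            using i by (intro span_mono) (auto simp: Bv_def)
          then show "u i \<in> span (Bv ({(x, b)} \<union> (\<Union>i\<in>I. BB i)) z)" using u spN i by blast
        qed
        then show "v \<in> span (Bv ({(x, b)} \<union> (\<Union>i\<in>I. BB i)) z)" using u(2) by (simp add: span_sum)
      qed
    qed
  qed
qed

end


definition down :: "('a \<Rightarrow> 'v) \<Rightarrow> ('a \<Rightarrow> 'v) \<Rightarrow> ('a \<Rightarrow> 'w \<Rightarrow> 'w::comm_monoid_add) \<Rightarrow> ('v \<times> 'w) set \<Rightarrow> 'a \<Rightarrow> bool" where
  "down src tgt f B \<alpha> \<longleftrightarrow> (\<exists>p. (\<forall>c\<in>Bv B (tgt \<alpha>). p c \<in> Bv B (src \<alpha>)) \<and>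
      (\<forall>d\<in>Bv B (src \<alpha>). f \<alpha> d = (\<Sum>c\<in>{c\<in>Bv B (tgt \<alpha>). p c = d}. c)))"

definition up :: "('a \<Rightarrow> 'v) \<Rightarrow> ('a \<Rightarrow> 'v) \<Rightarrow> ('a \<Rightarrow> 'w \<Rightarrow> 'w) \<Rightarrow> ('v \<times> 'w) set \<Rightarrow> 'a \<Rightarrow> bool" where
  "up src tgt f B \<alpha> \<longleftrightarrow> (\<forall>d\<in>Bv B (src \<alpha>). f \<alpha> d \<in> Bv B (tgt \<alpha>))"

lemma graph_sep:
  assumes T: "tree_quiver src tgt" and a1: "adjacent src tgt x y" and a2: "adjacent src tgt x v" and ne: "y \<noteq> v"
  shows "\<not> ravoid src tgt {x} y v"
proof
  assume R: "ravoid src tgt {x} y v"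
  let ?E = "\<lambda>a b. adjacent src tgt a b \<and> {a,b} \<noteq> {v,x}"
  have xv: "x \<noteq> v" using adj_neq[OF T a2] .
  have d: "{x,y} \<noteq> {v,x}" using ne xv by (simp add: doubleton_eq_iff)
  have "?E x y" using a1 d by simp
  moreover have "?E\<^sup>*\<^sup>* y v" using ravoid_E[OF R, of v] .
  ultimately have "?E\<^sup>*\<^sup>* x v" by (rule converse_rtranclp_into_rtranclp)
  moreover have "adjacent src tgt v x" using a2 adj_sym by metis
  ultimately show False using no_other_path[OF T \<open>adjacent src tgt v x\<close>] by simp
qed

context vector_space begin

lemma support:
  assumes sub: "\<forall>z. subspace (N z)"
    and cl: "\<forall>a. \<forall>w\<in>N (src a). rest_map src tgt x f a w \<in> N (tgt a)"
    and f0: "\<forall>a. f a 0 = 0"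
    and ind: "indecomposable scale src tgt N (rest_map src tgt x f)"
    and y: "y \<noteq> x" "N y \<noteq> {0}"
    and z: "N z \<noteq> {0}"
  shows "ravoid src tgt {x} y z"
proof (rule ccontr)
  assume nz: "\<not> ravoid src tgt {x} y z"
  let ?g = "rest_map src tgt x f"
  let ?C = "\<lambda>z. ravoid src tgt {x} y z"
  define U1 where "U1 z = (if ?C z then N z else {0})" for z
  define U2 where "U2 z = (if ?C z then {0} else N z)" for z
  have g0: "?g a 0 = 0" for a using f0 by (simp add: rest_map_def)
  have N0: "0 \<in> N z" for z using subspace_0 sub by blast
  have U10: "0 \<in> U1 z" for z using N0 by (simp add: U1_def)
  have U20: "0 \<in> U2 z" for z using N0 by (simp add: U2_def)
  have adj: "adjacent src tgt (src a) (tgt a)" for a unfolding adjacent_def by blast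
  have adj': "adjacent src tgt (tgt a) (src a)" for a unfolding adjacent_def by blast
  have s1: "subrep scale src tgt N ?g U1"
    unfolding subrep_def
  proof (rule conjI)
    show "\<forall>z. subspace (U1 z) \<and> U1 z \<subseteq> N z" using sub N0 by (auto simp add: U1_def)
  next
    show "\<forall>a. \<forall>w\<in>U1 (src a). ?g a w \<in> U1 (tgt a)"
    proof (intro allI ballI)
    fix a w assume w: "w \<in> U1 (src a)"
    show "?g a w \<in> U1 (tgt a)"
    proof (cases "src a = x \<or> tgt a = x")
      case True then have "?g a w = 0" by (rule rest_map_x)
        then show ?thesis using U10 by simp
    next
      case False
      show ?thesis
      proof (cases "?C (src a)")
        case True
        then have "?C (tgt a)" using ravoid_step[OF True adj] False by auto
        then show ?thesis using w True cl by (auto simp: U1_def)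
      next
        case False
        then have "w = 0" using w by (simp add: U1_def)
        then show ?thesis using g0 U10 by simp
      qed
    qed
    qed
  qed
  have s2: "subrep scale src tgt N ?g U2"
    unfolding subrep_def
  proof (rule conjI)
    show "\<forall>z. subspace (U2 z) \<and> U2 z \<subseteq> N z" using sub N0 by (auto simp add: U2_def)
  next
    show "\<forall>a. \<forall>w\<in>U2 (src a). ?g a w \<in> U2 (tgt a)"
    proof (intro allI ballI)
    fix a w assume w: "w \<in> U2 (src a)"
    show "?g a w \<in> U2 (tgt a)"
    proof (cases "src a = x \<or> tgt a = x")
      case True then have "?g a w = 0" by (rule rest_map_x)
        then show ?thesis using U20 by simp
    next
      case xx: False
      show ?thesis
      proof (cases "?C (src a)")
        case True
        then have "w = 0" using w by (simp add: U2_def)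
        then show ?thesis using g0 U20 by simp
      next
        case False
        have "\<not> ?C (tgt a)"
        proof
          assume "?C (tgt a)"
          then have "?C (src a)" using ravoid_step[OF _ adj'] xx by blast
          then show False using False by simp
        qed
        then show ?thesis using w False cl by (auto simp: U2_def)
      qed
    qed
    qed
  qed
  have n1: "nonzero_rep U1" unfolding nonzero_rep_def U1_def
    using y by (intro exI[of _ y]) (simp add: ravoid_def)
  have n2: "nonzero_rep U2" unfolding nonzero_rep_def U2_def
    using z nz by (intro exI[of _ z]) simp
  have dec: "\<forall>z. U1 z \<inter> U2 z = {0} \<and> {u1 + u2 |u1 u2. u1 \<in> U1 z \<and> u2 \<in> U2 z} = N z"
  proof
    fix z
    have "0 \<in> N z" by (rule N0)
    then show "U1 z \<inter> U2 z = {0} \<and> {u1 + u2 |u1 u2. u1 \<in> U1 z \<and> u2 \<in> U2 z} = N z"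
      by (cases "?C z") (auto simp: U1_def U2_def)
  qed
  have "\<not> (\<exists>U1 U2. subrep scale src tgt N ?g U1 \<and> subrep scale src tgt N ?g U2 \<and>
              nonzero_rep U1 \<and> nonzero_rep U2 \<and>
              (\<forall>z. U1 z \<inter> U2 z = {0} \<and> {u1 + u2 | u1 u2. u1 \<in> U1 z \<and> u2 \<in> U2 z} = N z))"
    using ind unfolding indecomposable_def by (rule conjunct2)
  moreover have "\<exists>U1 U2. subrep scale src tgt N ?g U1 \<and> subrep scale src tgt N ?g U2 \<and>
              nonzero_rep U1 \<and> nonzero_rep U2 \<and>
              (\<forall>z. U1 z \<inter> U2 z = {0} \<and> {u1 + u2 | u1 u2. u1 \<in> U1 z \<and> u2 \<in> U2 z} = N z)"
    by (rule exI[of _ U1], rule exI[of _ U2]) (intro conjI s1 s2 n1 n2 dec)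
  ultimately show False by contradiction
qed


lemma rb_arrows:
  assumes T: "tree_quiver src tgt" and R: "radbasis scale src tgt V f x b B"
  shows "(\<forall>z. subspace (V z)) \<longrightarrow> (\<forall>a. \<forall>w\<in>V (src a). f a w \<in> V (tgt a)) \<longrightarrow> (\<forall>a. f a 0 = 0) \<longrightarrow>
     (\<forall>\<alpha>. (near src tgt x (src \<alpha>) (tgt \<alpha>) \<longrightarrow> down src tgt f B \<alpha>) \<and>
          (near src tgt x (tgt \<alpha>) (src \<alpha>) \<longrightarrow> up src tgt f B \<alpha>))"
  using R
proof induct
  case (simple V x b f)
  show ?case
  proof (intro impI allI)
    fix \<alpha>
    assume subV: "\<forall>z. subspace (V z)" and clV: "\<forall>a. \<forall>w\<in>V (src a). f a w \<in> V (tgt a)" and f0: "\<forall>a. f a 0 = 0"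
    have st: "src \<alpha> \<noteq> tgt \<alpha>" using T unfolding tree_quiver_def by blast
    have Bx: "Bv {(x,b)} x = {b}" by (auto simp: Bv_def)
    have Bz: "z \<noteq> x \<Longrightarrow> Bv {(x,b)} z = {}" for z by (auto simp: Bv_def)
    show "(near src tgt x (src \<alpha>) (tgt \<alpha>) \<longrightarrow> down src tgt f {(x, b)} \<alpha>) \<and>
          (near src tgt x (tgt \<alpha>) (src \<alpha>) \<longrightarrow> up src tgt f {(x, b)} \<alpha>)"
    proof (intro conjI impI)
      assume nr: "near src tgt x (src \<alpha>) (tgt \<alpha>)"
      show "down src tgt f {(x, b)} \<alpha>"
      proof (cases "src \<alpha> = x")
        case True
        then have tx: "tgt \<alpha> \<noteq> x" using st by simp
        have "f \<alpha> b \<in> V (tgt \<alpha>)" using clV True simple(3) by auto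
        then have "f \<alpha> b = 0" using simple(2) tx by auto
        then show ?thesis unfolding down_def using True Bx Bz[OF tx] by auto
      next
        case False
        have "tgt \<alpha> \<noteq> x"
        proof
          assume "tgt \<alpha> = x"
          then show False using nr not_near_root[of src tgt x "src \<alpha>"] False by simp
        qed
        then show ?thesis unfolding down_def using Bz[OF False] Bz[OF \<open>tgt \<alpha> \<noteq> x\<close>] by auto
      qed
    next
      assume nr: "near src tgt x (tgt \<alpha>) (src \<alpha>)"
      show "up src tgt f {(x,b)} \<alpha>"
      proof (cases "src \<alpha> = x")
        case True
        then have "tgt \<alpha> = x" using nr not_near_root[of src tgt x "tgt \<alpha>"] by simp
        then show ?thesis using st True by simp
      next
        case False then show ?thesis unfolding up_def using Bz[OF False] by simp
      qed
    qed
  qed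
next
  case (step V f x b I N y bb BB)
  let ?g = "rest_map src tgt x f"
  let ?B = "{(x, b)} \<union> (\<Union>i\<in>I. BB i)"
  show ?case
  proof (intro impI allI)
    fix \<alpha>
    assume subV: "\<forall>z. subspace (V z)" and clV: "\<forall>a. \<forall>w\<in>V (src a). f a w \<in> V (tgt a)" and f0: "\<forall>a. f a 0 = 0"
    have st: "src \<alpha> \<noteq> tgt \<alpha>" using T unfolding tree_quiver_def by blast
    have subN: "\<And>i z. i \<in> I \<Longrightarrow> subspace (N i z)" using step(7) subrep_props by blast
    have clN: "\<And>i. i \<in> I \<Longrightarrow> \<forall>a. \<forall>w\<in>N i (src a). ?g a w \<in> N i (tgt a)" using step(7) subrep_props by blast
    have g0: "\<forall>a. ?g a 0 = 0" using f0 by (simp add: rest_map_def)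
    have IH: "(near src tgt (y i) (src \<beta>) (tgt \<beta>) \<longrightarrow> down src tgt ?g (BB i) \<beta>) \<and>
              (near src tgt (y i) (tgt \<beta>) (src \<beta>) \<longrightarrow> up src tgt ?g (BB i) \<beta>)" if i: "i \<in> I" for i \<beta>
    proof -
      have H: "(\<forall>z. subspace (N i z)) \<longrightarrow> (\<forall>a. \<forall>w\<in>N i (src a). ?g a w \<in> N i (tgt a)) \<longrightarrow> (\<forall>a. ?g a 0 = 0) \<longrightarrow>
         (\<forall>\<alpha>. (near src tgt (y i) (src \<alpha>) (tgt \<alpha>) \<longrightarrow> down src tgt ?g (BB i) \<alpha>) \<and>
          (near src tgt (y i) (tgt \<alpha>) (src \<alpha>) \<longrightarrow> up src tgt ?g (BB i) \<alpha>))"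
        using step(13) i by blast
      have "\<forall>z. subspace (N i z)" using subN i by blast
      then show ?thesis using H clN[OF i] g0 by blast
    qed
    have basic: "finite (BB i) \<and> (\<forall>z w. (z,w)\<in>BB i \<longrightarrow> w \<in> N i z \<and> w \<noteq> 0) \<and> (y i, bb i) \<in> BB i \<and> (\<forall>w. (y i, w) \<in> BB i \<longrightarrow> w = bb i)"
      if i: "i \<in> I" for i
      using step(13) i rb_basic[of scale src tgt "N i"] by blast
    have memN: "w \<in> N i z \<and> w \<noteq> 0" if "i \<in> I" "w \<in> Bv (BB i) z" for i w z
      using basic[OF that(1)] that(2) unfolding Bv_def by blast
    have rootN: "Bv (BB i) (y i) = {bb i}" if "i \<in> I" for i
      using basic[OF that] unfolding Bv_def by blast
    have bbN: "bb i \<in> N i (y i)" "bb i \<noteq> 0" if "i \<in> I" for i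
      using memN[OF that, of "bb i" "y i"] rootN[OF that] by auto
    have adjy: "adjacent src tgt x (y i)" if "i \<in> I" for i using step(11) that by blast
    have yx: "y i \<noteq> x" if "i \<in> I" for i using adj_neq[OF T adjy[OF that]] by simp
    have Bvx: "Bv ?B x = {b}"
    proof -
      have "False" if "i \<in> I" "w \<in> Bv (BB i) x" for i w
      proof -
        have "w \<in> N i x" "w \<noteq> 0" using memN[OF that] by auto
        moreover have "N i x \<subseteq> rest_sp x V x" using dsum_sub[OF step(8) that(1)] .
        ultimately show False by (auto simp: rest_sp_def)
      qed
      then show ?thesis unfolding Bv_def by blast
    qed
    have Bvz: "Bv ?B z = (\<Union>i\<in>I. Bv (BB i) z)" if "z \<noteq> x" for z
      using that by (auto simp: Bv_def)
    have disj: "False" if "i \<in> I" "j \<in> I" "i \<noteq> j" "w \<in> Bv (BB i) z" "w \<in> Bv (BB j) z" for i j w z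
    proof -
      have "w = 0" using dsum_disj[OF step(8) step(6), of z i j w] subN memN that by blast
      then show False using memN that by blast
    qed
    have supp: "N i v = {0}" if i: "i \<in> I" and av: "adjacent src tgt x v" and ne: "y i \<noteq> v" for i v
    proof (rule ccontr)
      assume nz: "N i v \<noteq> {0}"
      have subNi: "\<forall>z. subspace (N i z)" using subN i by blast
      have "N i (y i) \<noteq> {0}" using bbN[OF i] by blast
      then have "ravoid src tgt {x} (y i) v"
        using support[OF subNi clN[OF i] f0 _ yx[OF i] _ nz] step(9) i by blast
      then show False using graph_sep[OF T adjy[OF i] av ne] by simp
    qed
    have emptyB: "Bv (BB i) v = {}" if "i \<in> I" "adjacent src tgt x v" "y i \<noteq> v" for i v
      using supp[OF that] memN[OF that(1)] by blast
    show "(near src tgt x (src \<alpha>) (tgt \<alpha>) \<longrightarrow> down src tgt f ?B \<alpha>) \<and>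
          (near src tgt x (tgt \<alpha>) (src \<alpha>) \<longrightarrow> up src tgt f ?B \<alpha>)"
    proof (cases "src \<alpha> = x")
      case sx: True
      have vx: "tgt \<alpha> \<noteq> x" using st sx by simp
      have av: "adjacent src tgt x (tgt \<alpha>)" using sx unfolding adjacent_def by blast
      have dn: "down src tgt f ?B \<alpha>"
      proof -
        have fb: "f \<alpha> b \<in> rest_sp x V (tgt \<alpha>)" using clV step(4) sx vx by (auto simp: rest_sp_def)
        obtain u0 where u0: "\<forall>i\<in>I. u0 i \<in> N i (tgt \<alpha>)" "f \<alpha> b = sum u0 I"
          using dsum_decomp[OF step(8) fb] by blast
        have u0v: "u0 i = (if y i = tgt \<alpha> then bb i else 0)" if i: "i \<in> I" for i
        proof (cases "y i = tgt \<alpha>")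
          case True
          from step(12) i obtain a where a: "(src a = x \<and> tgt a = y i \<and>
              (\<exists>u. (\<forall>j\<in>I. u j \<in> N j (y i)) \<and> f a b = sum u I \<and> u i = bb i))
              \<or> (src a = y i \<and> tgt a = x \<and> f a (bb i) = b)" by blast
          have "{src a, tgt a} = {src \<alpha>, tgt \<alpha>}" using a sx True by auto
          then have aa: "a = \<alpha>" by (rule arrow_unique[OF T])
          have "\<not> (src a = y i \<and> tgt a = x)" using aa sx True vx by auto
          then obtain u where u: "\<forall>j\<in>I. u j \<in> N j (tgt \<alpha>)" "f \<alpha> b = sum u I" "u i = bb i"
            using a aa True by auto
          have "u0 i = u i" using dsum_uniq[OF step(8) step(6) fb u0(1) u0(2) u(1) u(2) i] .
          then show ?thesis using u(3) True by simp
        next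
          case False
          then have "N i (tgt \<alpha>) = {0}" using supp[OF i av] by simp
          then show ?thesis using u0(1) i False by auto
        qed
        have sumeq: "f \<alpha> b = (\<Sum>i\<in>{i\<in>I. y i = tgt \<alpha>}. bb i)"
        proof -
          have "f \<alpha> b = (\<Sum>i\<in>I. if y i = tgt \<alpha> then bb i else 0)"
            using u0(2) u0v by (auto intro: sum.cong)
          also have "\<dots> = (\<Sum>i\<in>{i\<in>I. y i = tgt \<alpha>}. bb i)"
            using sum.inter_filter[OF step(6), of bb "\<lambda>i. y i = tgt \<alpha>"] by simp
          finally show ?thesis .
        qed
        have each: "Bv (BB i) (tgt \<alpha>) = (if y i = tgt \<alpha> then {bb i} else {})" if "i \<in> I" for i
        proof (cases "y i = tgt \<alpha>")
          case True then show ?thesis using rootN[OF that] by simp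
        next
          case False then show ?thesis using emptyB[OF that av False] by simp
        qed
        have Bv_v: "Bv ?B (tgt \<alpha>) = bb ` {i\<in>I. y i = tgt \<alpha>}"
          unfolding Bvz[OF vx] using each by auto
        have inj: "inj_on bb {i\<in>I. y i = tgt \<alpha>}"
        proof (rule inj_onI)
          fix i j assume i: "i \<in> {i\<in>I. y i = tgt \<alpha>}" and j: "j \<in> {i\<in>I. y i = tgt \<alpha>}" and e: "bb i = bb j"
          show "i = j"
          proof (rule ccontr)
            assume "i \<noteq> j"
            moreover have "bb i \<in> Bv (BB i) (tgt \<alpha>)"
              using rootN[of i] i by simp
            moreover have "bb i \<in> Bv (BB j) (tgt \<alpha>)"
              using rootN[of j] j e by simp
            ultimately show False using disj i j by blast
          qed
        qed
        show ?thesis unfolding down_def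
        proof (intro exI[of _ "\<lambda>_. b"] conjI ballI)
          fix c assume "c \<in> Bv ?B (tgt \<alpha>)"
          show "b \<in> Bv ?B (src \<alpha>)" using Bvx sx by simp
        next
          fix d assume "d \<in> Bv ?B (src \<alpha>)"
          then have d: "d = b" using Bvx sx by simp
          have e1: "{c \<in> Bv ?B (tgt \<alpha>). b = d} = bb ` {i\<in>I. y i = tgt \<alpha>}" using d Bv_v by simp
          have e2: "(\<Sum>c\<in>bb ` {i\<in>I. y i = tgt \<alpha>}. c) = (\<Sum>i\<in>{i\<in>I. y i = tgt \<alpha>}. bb i)"
            using sum.reindex[OF inj, of "\<lambda>c. c"] by (simp add: o_def)
          show "f \<alpha> d = (\<Sum>c\<in>{c \<in> Bv ?B (tgt \<alpha>). b = d}. c)"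
            unfolding e1 e2 using sumeq d by simp
        qed
      qed
      have "\<not> near src tgt x (tgt \<alpha>) (src \<alpha>)"
      proof
        assume "near src tgt x (tgt \<alpha>) (src \<alpha>)"
        then have "tgt \<alpha> = x" using sx not_near_root[of src tgt x "tgt \<alpha>"] by simp
        then show False using vx by simp
      qed
      then show ?thesis using dn by simp
    next
      case sxF: False
      show ?thesis
      proof (cases "tgt \<alpha> = x")
        case tx: True
        have au: "adjacent src tgt x (src \<alpha>)" using tx unfolding adjacent_def by blast
        have upp: "up src tgt f ?B \<alpha>" unfolding up_def
        proof
          fix d assume d: "d \<in> Bv ?B (src \<alpha>)"
          then obtain i where i: "i \<in> I" "d \<in> Bv (BB i) (src \<alpha>)" using Bvz[OF sxF] by blast
          have yi: "y i = src \<alpha>" using emptyB[OF i(1) au] i(2) by blast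
          then have db: "d = bb i" using rootN[OF i(1)] i(2) by simp
          from step(12) i(1) obtain a where a: "(src a = x \<and> tgt a = y i \<and>
              (\<exists>u. (\<forall>j\<in>I. u j \<in> N j (y i)) \<and> f a b = sum u I \<and> u i = bb i))
              \<or> (src a = y i \<and> tgt a = x \<and> f a (bb i) = b)" by blast
          have "{src a, tgt a} = {src \<alpha>, tgt \<alpha>}" using a tx yi by auto
          then have aa: "a = \<alpha>" by (rule arrow_unique[OF T])
          have "f \<alpha> (bb i) = b" using a aa sxF by auto
          then show "f \<alpha> d \<in> Bv ?B (tgt \<alpha>)" using db Bvx tx by simp
        qed
        have "\<not> near src tgt x (src \<alpha>) (tgt \<alpha>)"
        proof
          assume "near src tgt x (src \<alpha>) (tgt \<alpha>)"
          then have "src \<alpha> = x" using tx not_near_root[of src tgt x "src \<alpha>"] by simp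
          then show False using sxF by simp
        qed
        then show ?thesis using upp by simp
      next
        case txF: False
        have ga: "?g \<alpha> = f \<alpha>" using sxF txF by (simp add: rest_map_def)
        show ?thesis
        proof (intro conjI impI)
          assume nr: "near src tgt x (src \<alpha>) (tgt \<alpha>)"
          have Di: "\<forall>i\<in>I. down src tgt ?g (BB i) \<alpha>"
          proof
            fix i assume i: "i \<in> I"
            have "near src tgt (y i) (src \<alpha>) (tgt \<alpha>)"
              using near_shift[OF nr _ adjy[OF i]] sxF st by metis
            then show "down src tgt ?g (BB i) \<alpha>" using IH[OF i] by blast
          qed
          then have "\<forall>i\<in>I. \<exists>p. (\<forall>c\<in>Bv (BB i) (tgt \<alpha>). p c \<in> Bv (BB i) (src \<alpha>)) \<and>
              (\<forall>d\<in>Bv (BB i) (src \<alpha>). f \<alpha> d = (\<Sum>c\<in>{c\<in>Bv (BB i) (tgt \<alpha>). p c = d}. c))"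
            unfolding down_def ga .
          then obtain P where P: "\<forall>i\<in>I. (\<forall>c\<in>Bv (BB i) (tgt \<alpha>). P i c \<in> Bv (BB i) (src \<alpha>)) \<and>
              (\<forall>d\<in>Bv (BB i) (src \<alpha>). f \<alpha> d = (\<Sum>c\<in>{c\<in>Bv (BB i) (tgt \<alpha>). P i c = d}. c))"
            by (rule bchoice[THEN exE]) blast
          define idx where "idx c = (SOME i. i \<in> I \<and> c \<in> Bv (BB i) (tgt \<alpha>))" for c
          have idx: "idx c = i" if "i \<in> I" "c \<in> Bv (BB i) (tgt \<alpha>)" for i c
            unfolding idx_def
          proof (rule some_equality)
            show "i \<in> I \<and> c \<in> Bv (BB i) (tgt \<alpha>)" using that by simp
          next
            fix j assume "j \<in> I \<and> c \<in> Bv (BB j) (tgt \<alpha>)"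
            then show "j = i" using disj[of j i c "tgt \<alpha>"] that by blast
          qed
          show "down src tgt f ?B \<alpha>" unfolding down_def
          proof (intro exI[of _ "\<lambda>c. P (idx c) c"] conjI ballI)
            fix c assume "c \<in> Bv ?B (tgt \<alpha>)"
            then obtain i where i: "i \<in> I" "c \<in> Bv (BB i) (tgt \<alpha>)" using Bvz[OF txF] by blast
            have "P i c \<in> Bv (BB i) (src \<alpha>)" using P i by blast
            then show "P (idx c) c \<in> Bv ?B (src \<alpha>)" using idx[OF i] i(1) Bvz[OF sxF] by auto
          next
            fix d assume "d \<in> Bv ?B (src \<alpha>)"
            then obtain i where i: "i \<in> I" "d \<in> Bv (BB i) (src \<alpha>)" using Bvz[OF sxF] by blast
            have se: "{c \<in> Bv ?B (tgt \<alpha>). P (idx c) c = d} = {c\<in>Bv (BB i) (tgt \<alpha>). P i c = d}"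
            proof (intro equalityI subsetI)
              fix c assume c: "c \<in> {c \<in> Bv ?B (tgt \<alpha>). P (idx c) c = d}"
              then obtain j where j: "j \<in> I" "c \<in> Bv (BB j) (tgt \<alpha>)" using Bvz[OF txF] by blast
              have pj: "P j c = d" using c idx[OF j] by simp
              have "P j c \<in> Bv (BB j) (src \<alpha>)" using P j by blast
              then have "j = i" using disj[of i j d "src \<alpha>"] pj i j by blast
              then show "c \<in> {c\<in>Bv (BB i) (tgt \<alpha>). P i c = d}" using j pj by simp
            next
              fix c assume c: "c \<in> {c\<in>Bv (BB i) (tgt \<alpha>). P i c = d}"
              then show "c \<in> {c \<in> Bv ?B (tgt \<alpha>). P (idx c) c = d}"
                using idx[OF i(1)] Bvz[OF txF] i(1) by auto
            qed
            show "f \<alpha> d = (\<Sum>c\<in>{c \<in> Bv ?B (tgt \<alpha>). P (idx c) c = d}. c)"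
              unfolding se using P i by blast
          qed
        next
          assume nr: "near src tgt x (tgt \<alpha>) (src \<alpha>)"
          show "up src tgt f ?B \<alpha>" unfolding up_def
          proof
            fix d assume "d \<in> Bv ?B (src \<alpha>)"
            then obtain i where i: "i \<in> I" "d \<in> Bv (BB i) (src \<alpha>)" using Bvz[OF sxF] by blast
            have "near src tgt (y i) (tgt \<alpha>) (src \<alpha>)"
              using near_shift[OF nr _ adjy[OF i(1)]] txF st by metis
            then have "up src tgt ?g (BB i) \<alpha>" using IH[OF i(1)] by blast
            then have "f \<alpha> d \<in> Bv (BB i) (tgt \<alpha>)" using i(2) ga unfolding up_def by auto
            then show "f \<alpha> d \<in> Bv ?B (tgt \<alpha>)" using Bvz[OF txF] i(1) by blast
          qed
        qed
      qed
    qed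
  qed
qed


lemma lin0: "lin_on scale A g \<Longrightarrow> 0 \<in> A \<Longrightarrow> g 0 = 0"
  unfolding lin_on_def by (metis add_0 add_cancel_right_right)

lemma img_span:
  assumes subY: "subspace Y" and BY: "By \<subseteq> Y" "Y \<subseteq> span By"
    and lin: "lin_on scale Y g" and gB: "\<forall>d\<in>By. g d \<in> span T"
  shows "\<forall>u\<in>Y. g u \<in> span T"
proof
  fix u assume u: "u \<in> Y"
  then have us: "u \<in> span By" using BY by blast
  have "u \<in> Y \<and> g u \<in> span T" using us
  proof (induct rule: span_induct_alt)
    case base
    have "0 \<in> Y" using subspace_0[OF subY] .
    then show ?case using lin0[OF lin] span_zero by simp
  next
    case (step c d w)
    have dY: "d \<in> Y" using step(1) BY by blast
    then have cd: "c *s d \<in> Y" using subspace_scale[OF subY] by blast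
    have "g (c *s d + w) = g (c *s d) + g w" using lin cd step(2) unfolding lin_on_def by blast
    also have "\<dots> = c *s g d + g w" using lin dY unfolding lin_on_def by simp
    finally have "g (c *s d + w) = c *s g d + g w" .
    moreover have "c *s g d + g w \<in> span T" using gB step span_scale span_add by blast
    moreover have "c *s d + w \<in> Y" using cd step(2) subspace_add[OF subY] by blast
    ultimately show ?case by simp
  qed
  then show "g u \<in> span T" by simp
qed

lemma no_bad:
  assumes ext: "ext1_vanishes scale src tgt V f"
    and subV: "\<forall>z. subspace (V z)"
    and indep: "independent By" and BY: "V (src \<alpha>) \<subseteq> span By"
    and v0: "v0 \<in> V (src \<alpha>)" "f \<alpha> v0 = 0" and rep1: "representation By v0 d1 = 1"
    and w0: "w0 \<in> V (tgt \<alpha>)" "w0 \<notin> f \<alpha> ` V (src \<alpha>)"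
  shows False
proof -
  define h where "h \<beta> = (if \<beta> = \<alpha> then (\<lambda>v. representation By v d1 *s w0) else (\<lambda>v. 0))" for \<beta>
  have hyp: "\<forall>a. lin_on scale (V (src a)) (h a) \<and> h a ` V (src a) \<subseteq> V (tgt a)"
  proof
    fix a
    show "lin_on scale (V (src a)) (h a) \<and> h a ` V (src a) \<subseteq> V (tgt a)"
    proof (cases "a = \<alpha>")
      case True
      have l: "lin_on scale (V (src a)) (h a)" unfolding lin_on_def h_def
      proof (intro conjI ballI allI)
        fix u v assume "u \<in> V (src a)" "v \<in> V (src a)"
        then have "u \<in> span By" "v \<in> span By" using BY True by auto
        then show "(if a = \<alpha> then \<lambda>v. representation By v d1 *s w0 else (\<lambda>v. 0)) (u + v) =
          (if a = \<alpha> then \<lambda>v. representation By v d1 *s w0 else (\<lambda>v. 0)) u +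
          (if a = \<alpha> then \<lambda>v. representation By v d1 *s w0 else (\<lambda>v. 0)) v"
          using True representation_add[OF indep] by (simp add: scale_left_distrib)
      next
        fix c v assume "v \<in> V (src a)"
        then have "v \<in> span By" using BY True by auto
        then show "(if a = \<alpha> then \<lambda>v. representation By v d1 *s w0 else (\<lambda>v. 0)) (c *s v) =
          c *s (if a = \<alpha> then \<lambda>v. representation By v d1 *s w0 else (\<lambda>v. 0)) v"
          using True representation_scale[OF indep] by simp
      qed
      have "h a ` V (src a) \<subseteq> V (tgt a)" unfolding h_def using True subspace_scale[OF subV[rule_format] w0(1)] by auto
      then show ?thesis using l by simp
    next
      case False
      have "0 \<in> V (tgt a)" using subspace_0[OF subV[rule_format]] .
      then show ?thesis using False unfolding lin_on_def h_def by auto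
    qed
  qed
  obtain \<phi> where phi: "\<forall>z. lin_on scale (V z) (\<phi> z) \<and> \<phi> z ` V z \<subseteq> V z"
    and eq: "\<forall>a. \<forall>v\<in>V (src a). h a v = f a (\<phi> (src a) v) - \<phi> (tgt a) (f a v)"
  proof -
    have "\<exists>\<phi>. (\<forall>z. lin_on scale (V z) (\<phi> z) \<and> \<phi> z ` V z \<subseteq> V z) \<and>
      (\<forall>a. \<forall>v\<in>V (src a). h a v = f a (\<phi> (src a) v) - \<phi> (tgt a) (f a v))"
      using ext[unfolded ext1_vanishes_def, rule_format, of h, OF hyp[rule_format]] .
    then show ?thesis using that by (elim exE conjE)
  qed
  have "h \<alpha> v0 = w0" using rep1 by (simp add: h_def)
  moreover have "\<phi> (tgt \<alpha>) 0 = 0" using lin0[of "V (tgt \<alpha>)" "\<phi> (tgt \<alpha>)"] phi subspace_0[OF subV[rule_format]] by blast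
  moreover have "h \<alpha> v0 = f \<alpha> (\<phi> (src \<alpha>) v0) - \<phi> (tgt \<alpha>) (f \<alpha> v0)" using eq v0(1) by blast
  ultimately have "w0 = f \<alpha> (\<phi> (src \<alpha>) v0)" using v0(2) by simp
  moreover have "\<phi> (src \<alpha>) v0 \<in> V (src \<alpha>)" using phi v0(1) by blast
  ultimately show False using w0(2) by blast
qed

lemma exists_outside:
  assumes fin: "finite T" and lt: "card T < dim W"
  shows "\<exists>w0\<in>W. w0 \<notin> span T"
proof (rule ccontr)
  assume "\<not> ?thesis"
  then have "W \<subseteq> span T" by blast
  then have "dim W \<le> card T" using dim_le_card fin by blast
  then show False using lt by simp
qed

lemma final:
  assumes T: "tree_quiver src tgt"
    and rep: "is_rep scale src tgt V f"
    and exc: "exceptional scale src tgt V f"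
    and R: "radbasis scale src tgt V f x b B"
    and dims: "dim (V (src \<alpha>)) = dim (V (tgt \<alpha>))"
  shows "\<exists>us ws. distinct us \<and> distinct ws \<and>
            set us = {w. (src \<alpha>, w) \<in> B} \<and> set ws = {w. (tgt \<alpha>, w) \<in> B} \<and>
            length us = length ws \<and>
            (\<forall>j < length us. f \<alpha> (us ! j) = ws ! j)"
proof -
  have subV: "\<forall>z. subspace (V z)" using rep unfolding is_rep_def by blast
  have clV: "\<forall>a. \<forall>w\<in>V (src a). f a w \<in> V (tgt a)" using rep unfolding is_rep_def by blast
  have linV: "lin_on scale (V (src a)) (f a)" for a using rep unfolding is_rep_def by blast
  have f0: "\<forall>a. f a 0 = 0" using lin0[OF linV subspace_0[OF subV[rule_format]]] by blast
  have ext: "ext1_vanishes scale src tgt V f" using exc unfolding exceptional_def by blast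
  have basic: "finite B \<and> (\<forall>z w. (z,w)\<in>B \<longrightarrow> w \<in> V z \<and> w \<noteq> 0) \<and> (x,b) \<in> B \<and> (\<forall>w. (x,w)\<in>B \<longrightarrow> w = b)"
    using rb_basic[OF R] .
  have ind: "independent (Bv B z)" for z using rb_indep[OF R] subV by blast
  have spn: "V z \<subseteq> span (Bv B z)" for z using rb_span[OF R] subV by blast
  have inV: "Bv B z \<subseteq> V z" for z using basic unfolding Bv_def by blast
  have finB: "finite (Bv B z)" for z
  proof -
    have "Bv B z \<subseteq> snd ` B" unfolding Bv_def by force
    then show ?thesis using basic finite_subset by blast
  qed
  have cardB: "card (Bv B z) = dim (V z)" for z using basis_card_eq_dim[OF inV spn ind] .
  define By where "By = Bv B (src \<alpha>)"
  define Bz where "Bz = Bv B (tgt \<alpha>)"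
  have cc: "card By = card Bz" using cardB dims unfolding By_def Bz_def by simp
  have finy: "finite By" and finz: "finite Bz" using finB unfolding By_def Bz_def by auto
  have sety: "{w. (src \<alpha>, w) \<in> B} = By" and setz: "{w. (tgt \<alpha>, w) \<in> B} = Bz"
    unfolding By_def Bz_def Bv_def by auto
  have adj: "adjacent src tgt (src \<alpha>) (tgt \<alpha>)" unfolding adjacent_def by blast
  have arr: "(near src tgt x (src \<alpha>) (tgt \<alpha>) \<longrightarrow> down src tgt f B \<alpha>) \<and>
          (near src tgt x (tgt \<alpha>) (src \<alpha>) \<longrightarrow> up src tgt f B \<alpha>)"
    using rb_arrows[OF T R] subV clV f0 by blast
  have imgspan: "\<forall>u\<in>V (src \<alpha>). f \<alpha> u \<in> span T" if "\<forall>d\<in>By. f \<alpha> d \<in> span T" for T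
    using img_span[OF _ inV[of "src \<alpha>"] spn[of "src \<alpha>"] linV[of \<alpha>]] that subV unfolding By_def by blast
  from near_or[OF T adj, of x] show ?thesis
  proof
    assume "near src tgt x (src \<alpha>) (tgt \<alpha>)"
    then have "down src tgt f B \<alpha>" using arr by blast
    then obtain p where p1: "\<forall>c\<in>Bz. p c \<in> By" and p2: "\<forall>d\<in>By. f \<alpha> d = (\<Sum>c\<in>{c\<in>Bz. p c = d}. c)"
      unfolding down_def By_def Bz_def by blast
    show ?thesis
    proof (cases "p ` Bz = By")
      case True
      have inj: "inj_on p Bz" using eq_card_imp_inj_on[OF finz, of p] True cc by simp
      have bij: "bij_betw p Bz By" using inj True unfolding bij_betw_def by simp
      obtain us where us: "distinct us" "set us = By" using finite_distinct_list[OF finy] by blast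
      define q where "q = inv_into Bz p"
      have fib: "{c\<in>Bz. p c = d} = {q d}" if "d \<in> By" for d
      proof -
        have "q d \<in> Bz" "p (q d) = d" using that True unfolding q_def by (auto intro: inv_into_into f_inv_into_f)
        moreover have "c = q d" if "c \<in> Bz" "p c = d" for c using that inj unfolding q_def by (auto intro: inv_into_f_f[symmetric])
        ultimately show ?thesis by blast
      qed
      have fq: "f \<alpha> d = q d" if "d \<in> By" for d using p2 fib that by simp
      have bq: "bij_betw q By Bz" using bij_betw_inv_into[OF bij] unfolding q_def .
      show ?thesis
      proof (rule exI[of _ us], rule exI[of _ "map q us"], intro conjI allI impI)
        show "distinct us" by (rule us(1))
        show "distinct (map q us)" using us bq unfolding bij_betw_def by (simp add: distinct_map)
        show "set us = {w. (src \<alpha>, w) \<in> B}" using us sety by simp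
        show "set (map q us) = {w. (tgt \<alpha>, w) \<in> B}" using us bq setz unfolding bij_betw_def by simp
        show "length us = length (map q us)" by simp
        fix j assume "j < length us"
        then show "f \<alpha> (us ! j) = map q us ! j" using fq us(2) nth_mem by force
      qed
    next
      case False
      have "p ` Bz \<subseteq> By" using p1 by blast
      with False obtain d0 where d0: "d0 \<in> By" "d0 \<notin> p ` Bz" by blast
      have fd0: "f \<alpha> d0 = 0"
      proof -
        have e: "{c\<in>Bz. p c = d0} = {}" using d0 by blast
        have "f \<alpha> d0 = (\<Sum>c\<in>{c\<in>Bz. p c = d0}. c)" using p2 d0(1) by blast
        then show ?thesis unfolding e by simp
      qed
      define T where "T = (\<lambda>d. \<Sum>c\<in>{c\<in>Bz. p c = d}. c) ` (By - {d0})"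
      have "\<forall>d\<in>By. f \<alpha> d \<in> span T"
      proof
        fix d assume d: "d \<in> By"
        show "f \<alpha> d \<in> span T"
        proof (cases "d = d0")
          case True then show ?thesis using fd0 span_zero by simp
        next
          case False
          then have "f \<alpha> d \<in> T" using p2 d unfolding T_def by blast
          then show ?thesis using span_base by blast
        qed
      qed
      then have img: "\<forall>u\<in>V (src \<alpha>). f \<alpha> u \<in> span T" by (rule imgspan)
      have finT: "finite T" unfolding T_def using finy by simp
      have "card T \<le> card (By - {d0})" unfolding T_def by (rule card_image_le) (use finy in simp)
      also have "\<dots> < card By" using card_Diff1_less[OF finy d0(1)] .
      also have "\<dots> = dim (V (tgt \<alpha>))" using cc cardB unfolding Bz_def by simp
      finally obtain w0 where w0: "w0 \<in> V (tgt \<alpha>)" "w0 \<notin> span T" using exists_outside[OF finT] by blast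
      have w0': "w0 \<notin> f \<alpha> ` V (src \<alpha>)" using img w0(2) by blast
      have d0V: "d0 \<in> V (src \<alpha>)" using d0(1) inV unfolding By_def by blast
      have r1: "representation By d0 d0 = 1" using representation_basis[OF ind[of "src \<alpha>", folded By_def] d0(1)] by simp
      show ?thesis using no_bad[OF ext subV ind[of "src \<alpha>", folded By_def] spn[of "src \<alpha>", folded By_def] d0V fd0 r1 w0(1) w0'] by simp
    qed
  next
    assume "near src tgt x (tgt \<alpha>) (src \<alpha>)"
    then have "up src tgt f B \<alpha>" using arr by blast
    then have u1: "\<forall>d\<in>By. f \<alpha> d \<in> Bz" unfolding up_def By_def Bz_def by blast
    show ?thesis
    proof (cases "inj_on (f \<alpha>) By")
      case True
      have "card (f \<alpha> ` By) = card Bz" using card_image[OF True] cc by simp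
      then have im: "f \<alpha> ` By = Bz" using card_subset_eq[OF finz] u1 by blast
      obtain us where us: "distinct us" "set us = By" using finite_distinct_list[OF finy] by blast
      show ?thesis
      proof (rule exI[of _ us], rule exI[of _ "map (f \<alpha>) us"], intro conjI allI impI)
        show "distinct us" by (rule us(1))
        show "distinct (map (f \<alpha>) us)" using us True by (simp add: distinct_map)
        show "set us = {w. (src \<alpha>, w) \<in> B}" using us sety by simp
        show "set (map (f \<alpha>) us) = {w. (tgt \<alpha>, w) \<in> B}" using us im setz by simp
        show "length us = length (map (f \<alpha>) us)" by simp
        fix j assume "j < length us"
        then show "f \<alpha> (us ! j) = map (f \<alpha>) us ! j" by simp
      qed
    next
      case False
      then obtain d1 d2 where dd: "d1 \<in> By" "d2 \<in> By" "d1 \<noteq> d2" "f \<alpha> d1 = f \<alpha> d2"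
        unfolding inj_on_def by blast
      have indy: "independent By" using ind unfolding By_def .
      have d1V: "d1 \<in> V (src \<alpha>)" and d2V: "d2 \<in> V (src \<alpha>)" using dd inV unfolding By_def by blast+
      define v0 where "v0 = d1 - d2"
      have v0V: "v0 \<in> V (src \<alpha>)" unfolding v0_def using subspace_diff[OF subV[rule_format] d1V d2V] .
      have "f \<alpha> d1 = f \<alpha> (v0 + d2)" unfolding v0_def by simp
      also have "\<dots> = f \<alpha> v0 + f \<alpha> d2" using linV[of \<alpha>] v0V d2V unfolding lin_on_def by blast
      finally have fv0: "f \<alpha> v0 = 0" using dd(4) by simp
      have r1: "representation By v0 d1 = 1"
        unfolding v0_def using representation_diff[OF indy span_base[OF dd(2)] span_base[OF dd(1)]]
          representation_basis[OF indy dd(1)] representation_basis[OF indy dd(2)] dd(3) by simp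
      define T where "T = f \<alpha> ` By"
      have "\<forall>d\<in>By. f \<alpha> d \<in> span T" unfolding T_def using span_base by blast
      then have img: "\<forall>u\<in>V (src \<alpha>). f \<alpha> u \<in> span T" by (rule imgspan)
      have finT: "finite T" unfolding T_def using finy by simp
      have "card T < card By" unfolding T_def
      proof -
        have "card (f \<alpha> ` By) \<le> card By" by (rule card_image_le[OF finy])
        moreover have "card (f \<alpha> ` By) \<noteq> card By" using False eq_card_imp_inj_on[OF finy] by blast
        ultimately show "card (f \<alpha> ` By) < card By" by simp
      qed
      also have "\<dots> = dim (V (tgt \<alpha>))" using cc cardB unfolding Bz_def by simp
      finally obtain w0 where w0: "w0 \<in> V (tgt \<alpha>)" "w0 \<notin> span T" using exists_outside[OF finT] by blast
      have w0': "w0 \<notin> f \<alpha> ` V (src \<alpha>)" using img w0(2) by blast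
      show ?thesis using no_bad[OF ext subV indy spn[of "src \<alpha>", folded By_def] v0V fv0 r1 w0(1) w0'] by simp
    qed
  qed
qed

end

theorem corollary2:
  fixes s :: "'k::field \<Rightarrow> 'w::ab_group_add \<Rightarrow> 'w"
    and src tgt :: "'a \<Rightarrow> 'v"
    and V :: "'v \<Rightarrow> 'w set" and f :: "'a \<Rightarrow> 'w \<Rightarrow> 'w"
    and x :: 'v and b :: 'w and B :: "('v \<times> 'w) set" and \<alpha> :: 'a
  assumes "vector_space s"
    and "tree_quiver src tgt" and "locally_finite src tgt"
    and "is_rep s src tgt V f"
    and "radiation s src tgt V f x"
    and "exceptional s src tgt V f"
    and "radbasis s src tgt V f x b B"
    and "vector_space.dim s (V (src \<alpha>)) = vector_space.dim s (V (tgt \<alpha>))"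
  shows "\<exists>us ws. distinct us \<and> distinct ws \<and>
            set us = {w. (src \<alpha>, w) \<in> B} \<and> set ws = {w. (tgt \<alpha>, w) \<in> B} \<and>
            length us = length ws \<and>
            (\<forall>j < length us. f \<alpha> (us ! j) = ws ! j)"
proof -
  interpret vector_space s by (rule assms(1))
  show ?thesis using final[OF assms(2) assms(4) assms(6) assms(7) assms(8)] .
qed

end
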